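(* Let $S$ be a modal left $E$-monoid, with $e\in E(S)$ and $f\in E$. Then $(e\cdot f)e$ is an idempotent which is a greatest lower bound of $e$ and $f$ in $E(S)$ with respect to $\le_r$ (that is, $(e\cdot f)e\le_r e$, $(e\cdot f)e\le_r f$, and every $g\in E(S)$ with $g\le_r e$ and $g\le_r f$ satisfies $g\le_r (e\cdot f)e$). Moreover, if $s\in S$ satisfies $se=sf=s$, then $s(e\cdot f)e=s$.
   Context: For a semigroup $S$, $E(S)$ is its set of idempotents; for $e,f\in E(S)$, $e\le_r f$ iff $e=ef$ (a quasiorder on $E(S)$). $E\subseteq E(S)$ is right pre-reduced if $e=ef$ and $f=fe$ imply $e=f$ for $e,f\in E$. Let $S$ be a monoid and $1\in E\subseteq E(S)$. $S$ is a modal left $E$-monoid if $E$ is right pre-reduced and (I1') for all $t\in S$, $e\in E$ there is $t\cdot e\in E$ such that for all $s\in S$: $ste=st$ iff $s(t\cdot e)=s$; the (necessarily unique) map $(t,e)\mapsto t\cdot e$ on $S\times E$ is the left $E$-modal operation. *)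

theory Defs
  imports Main
begin

text \<open>The monoid S is the whole carrier of a type of class monoid_mult.\<close>

definition idem :: "'a::monoid_mult \<Rightarrow> bool" where
  "idem e \<longleftrightarrow> e * e = e"

definition le_r :: "'a::monoid_mult \<Rightarrow> 'a \<Rightarrow> bool" where
  "le_r e f \<longleftrightarrow> e = e * f"

definition right_pre_reduced :: "'a::monoid_mult set \<Rightarrow> bool" where
  "right_pre_reduced E \<longleftrightarrow>
     (\<forall>e\<in>E. \<forall>f\<in>E. e = e * f \<and> f = f * e \<longrightarrow> e = f)"

text \<open>S is a modal left E-monoid with left E-modal operation dot (t \<cdot> e = dot t e).\<close>
definition modal_left_E_monoid :: "'a::monoid_mult set \<Rightarrow> ('a \<Rightarrow> 'a \<Rightarrow> 'a) \<Rightarrow> bool" where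
  "modal_left_E_monoid E dot \<longleftrightarrow>
     1 \<in> E \<and> (\<forall>e\<in>E. idem e) \<and> right_pre_reduced E \<and>
     (\<forall>t. \<forall>e\<in>E. dot t e \<in> E \<and> (\<forall>s. s * t * e = s * t \<longleftrightarrow> s * dot t e = s))"

end

theory Submission
  imports Defs
begin

theorem lemma5p6:
  fixes E :: "'a::monoid_mult set" and dot :: "'a \<Rightarrow> 'a \<Rightarrow> 'a" and e f :: 'a
  assumes "modal_left_E_monoid E dot"
    and "idem e"
    and "f \<in> E"
  shows "idem (dot e f * e)
    \<and> le_r (dot e f * e) e
    \<and> le_r (dot e f * e) f
    \<and> (\<forall>g. idem g \<and> le_r g e \<and> le_r g f \<longrightarrow> le_r g (dot e f * e))
    \<and> (\<forall>s. s * e = s \<and> s * f = s \<longrightarrow> s * (dot e f * e) = s)"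
proof -
  define d where "d = dot e f"
  have dE: "d \<in> E" and key: "\<And>s. s * e * f = s * e \<longleftrightarrow> s * d = s"
    using assms(1,3) unfolding modal_left_E_monoid_def d_def by auto
  have dd: "d * d = d" using assms(1) dE unfolding modal_left_E_monoid_def idem_def by auto
  have ee: "e * e = e" using assms(2) unfolding idem_def .
  have def_: "d * e * f = d * e" using key[of d] dd by simp
  have ded: "d * e * d = d * e"
  proof -
    have "d * e * e * f = d * e * e" using def_ ee by (simp add: mult.assoc)
    thus ?thesis using key[of "d*e"] by simp
  qed
  have i: "idem (d * e)" unfolding idem_def
    by (metis ded ee mult.assoc)
  have l1: "le_r (d * e) e" unfolding le_r_def by (metis ee mult.assoc)
  have l2: "le_r (d * e) f" unfolding le_r_def using def_ by (simp add: mult.assoc)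
  have l3: "\<forall>g. idem g \<and> le_r g e \<and> le_r g f \<longrightarrow> le_r g (d * e)"
  proof (intro allI impI)
    fix g assume "idem g \<and> le_r g e \<and> le_r g f"
    hence ge: "g = g * e" and gf: "g = g * f" unfolding le_r_def by auto
    have "g * e * f = g * e" using ge gf by simp
    hence "g * d = g" using key by simp
    thus "le_r g (d * e)" unfolding le_r_def by (metis ge mult.assoc)
  qed
  have l4: "\<forall>s. s * e = s \<and> s * f = s \<longrightarrow> s * (d * e) = s"
  proof (intro allI impI)
    fix s assume h: "s * e = s \<and> s * f = s"
    hence "s * e * f = s * e" by simp
    hence "s * d = s" using key by simp
    thus "s * (d * e) = s" using h by (metis mult.assoc)
  qed
  show ?thesis using i l1 l2 l3 l4 unfolding d_def by blast
qed

end
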